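(* Let $(X,d)$ be a compact metric space, $f_{0,\infty}=\{f_n\}_{n=0}^\infty$ a sequence of continuous self-maps of $X$, and $\mu$ a Borel probability measure on $X$ that is $f_{0,\infty}$-invariant. For $k\ge1$ let $f^{(k)}_{0,\infty}=\{f_n\times\cdots\times f_n\ (k\text{ factors})\}_{n=0}^\infty$ on $X^k$, equipped with the product measure $\mu^{\otimes k}$. Then for any $A\in\mathcal{S}$, \[h_{A,\mu^{\otimes k}}(f_{0,\infty}^{(k)})=k\,h_{A,\mu}(f_{0,\infty}),\quad k\geq1.\]
   Context: $f_i^n=f_{i+n-1}\circ\cdots\circ f_i$, $f_i^0=\mathrm{id}$, $f_i^{-n}(B)=(f_i^n)^{-1}(B)$. $\mathcal S$ is the set of strictly increasing sequences $A=\{a_i\}_{i\ge1}$ of nonnegative integers. $\mu$ is $f_{0,\infty}$-invariant if $\mu(f_n^{-1}(B))=\mu(B)$ for all Borel $B$ and all $n\ge0$. For a finite Borel partition $\xi$, $\bigvee_{i=1}^n f_0^{-a_i}\xi$ is the common refinement of the partitions $f_0^{-a_i}\xi=\{f_0^{-a_i}C:C\in\xi\}$, $H_\mu(\eta)=-\sum_{C\in\eta}\mu(C)\ln\mu(C)$, $h_{A,\mu}(f_{0,\infty},\xi)=\limsup_{n\to\infty}\frac1nH_\mu(\bigvee_{i=1}^n f_0^{-a_i}\xi)$, and the measure-theoretic sequence entropy is $h_{A,\mu}(f_{0,\infty})=\sup_\xi h_{A,\mu}(f_{0,\infty},\xi)$ over finite Borel partitions of $X$ (analogously on $X^k$ with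 $\mu^{\otimes k}$). *)

theory Defs
  imports "HOL-Probability.Probability"
begin

fun fiter :: "(nat \<Rightarrow> 'b \<Rightarrow> 'b) \<Rightarrow> nat \<Rightarrow> nat \<Rightarrow> 'b \<Rightarrow> 'b" where
  "fiter T i 0 = id"
| "fiter T i (Suc n) = T (i + n) \<circ> fiter T i n"

definition fin_partition :: "'b measure \<Rightarrow> 'b set set \<Rightarrow> bool" where
  "fin_partition M P \<longleftrightarrow> finite P \<and> P \<subseteq> sets M \<and> \<Union>P = space M
     \<and> (\<forall>C\<in>P. \<forall>D\<in>P. C \<noteq> D \<longrightarrow> C \<inter> D = {})"

definition entr_fun :: "real \<Rightarrow> real" where
  "entr_fun p = (if p = 0 then 0 else - p * ln p)"

definition part_entropy :: "'b measure \<Rightarrow> 'b set set \<Rightarrow> real" where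
  "part_entropy M P = (\<Sum>C\<in>P. entr_fun (measure M C))"

text \<open>Common refinement of the partitions f_0^{-a_i} xi, i = 1..n (indices shifted: a 0, ..., a (n-1)).\<close>
definition seq_join ::
  "'b measure \<Rightarrow> (nat \<Rightarrow> 'b \<Rightarrow> 'b) \<Rightarrow> (nat \<Rightarrow> nat) \<Rightarrow> 'b set set \<Rightarrow> nat \<Rightarrow> 'b set set" where
  "seq_join M T a \<xi> n =
     {space M \<inter> (\<Inter>i\<in>{..<n}. fiter T 0 (a i) -` (c i)) | c. \<forall>i<n. c i \<in> \<xi>} - {{}}"

definition seq_entropy_part ::
  "'b measure \<Rightarrow> (nat \<Rightarrow> 'b \<Rightarrow> 'b) \<Rightarrow> (nat \<Rightarrow> nat) \<Rightarrow> 'b set set \<Rightarrow> ereal" where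
  "seq_entropy_part M T a \<xi> =
     limsup (\<lambda>n. ereal (part_entropy M (seq_join M T a \<xi> n) / real n))"

definition seq_entropy ::
  "'b measure \<Rightarrow> (nat \<Rightarrow> 'b \<Rightarrow> 'b) \<Rightarrow> (nat \<Rightarrow> nat) \<Rightarrow> ereal" where
  "seq_entropy M T a = (SUP \<xi>\<in>{\<xi>. fin_partition M \<xi>}. seq_entropy_part M T a \<xi>)"

end

theory Submission
  imports Defs
begin

definition pr :: "'b measure \<Rightarrow> ('b \<Rightarrow> 'c) \<Rightarrow> 'c \<Rightarrow> real" where
  "pr M X v = measure M (X -` {v} \<inter> space M)"

definition HH :: "'b measure \<Rightarrow> ('b \<Rightarrow> 'c) \<Rightarrow> real" where
  "HH M X = (\<Sum>v\<in>X ` space M. entr_fun (pr M X v))"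

lemma entr_fun_alt: "entr_fun p = - p * ln p"
  by (simp add: entr_fun_def)

lemma HH_entropy:
  assumes "prob_space M" "simple_function M X"
  shows "HH M X = prob_space.entropy M (exp 1) (count_space (X`space M)) X"
proof -
  interpret information_space M "exp 1"
    using assms(1) by (simp add: information_space_def information_space_axioms_def)
  have "entropy (exp 1) (count_space (X`space M)) X = - (\<Sum>x\<in>X`space M. prob (X -` {x} \<inter> space M) * log (exp 1) (prob (X -` {x} \<inter> space M)))"
    by (rule entropy_simple_distributed[OF simple_distributedI[OF assms(2) measure_nonneg refl]])
  then show ?thesis
    by (simp add: HH_def pr_def entr_fun_alt log_def sum_negf)
qed

lemma HH_cong_space:
  assumes "\<And>x. x \<in> space M \<Longrightarrow> X x = Y x"
  shows "HH M X = HH M Y"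
proof -
  have "X ` space M = Y ` space M" using assms by (auto simp: image_def)
  moreover have "\<And>v. X -` {v} \<inter> space M = Y -` {v} \<inter> space M" using assms by auto
  ultimately show ?thesis by (simp add: HH_def pr_def)
qed

lemma HH_mono:
  assumes "prob_space M" "simple_function M X"
    and "\<And>x y. x \<in> space M \<Longrightarrow> y \<in> space M \<Longrightarrow> X x = X y \<Longrightarrow> Y x = Y y"
  shows "HH M Y \<le> HH M X"
proof -
  interpret information_space M "exp 1"
    using assms(1) by (simp add: information_space_def information_space_axioms_def)
  define g where "g v = Y (SOME x. x \<in> space M \<and> X x = v)" for v
  have eq: "Y x = (g \<circ> X) x" if "x \<in> space M" for x
  proof -
    have "\<exists>y. y \<in> space M \<and> X y = X x" using that by blast
    then have "(SOME y. y \<in> space M \<and> X y = X x) \<in> space M \<and> X (SOME y. y \<in> space M \<and> X y = X x) = X x"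
      by (rule someI_ex)
    then show ?thesis using assms(3)[of x "SOME y. y \<in> space M \<and> X y = X x"] that by (simp add: g_def)
  qed
  have "HH M Y = HH M (g \<circ> X)" by (rule HH_cong_space) (use eq in auto)
  also have "\<dots> = entropy (exp 1) (count_space ((g \<circ> X)`space M)) (g \<circ> X)"
    by (rule HH_entropy[OF assms(1)]) (use assms(2) in auto)
  also have "\<dots> \<le> entropy (exp 1) (count_space (X`space M)) X"
    by (rule entropy_data_processing[OF assms(2)])
  also have "\<dots> = HH M X" by (rule HH_entropy[OF assms(1) assms(2), symmetric])
  finally show ?thesis .
qed

lemma HH_cong:
  assumes "prob_space M" "simple_function M X" "simple_function M Y"
    and "\<And>x y. x \<in> space M \<Longrightarrow> y \<in> space M \<Longrightarrow> X x = X y \<longleftrightarrow> Y x = Y y"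
  shows "HH M X = HH M Y"
  using HH_mono[OF assms(1) assms(2), of Y] HH_mono[OF assms(1) assms(3), of X] assms(4)
  by fastforce

lemma pr_nonneg: "0 \<le> pr M X v" by (simp add: pr_def)

lemma sf_level_sets: "simple_function M W \<Longrightarrow> W -` {w} \<inter> space M \<in> sets M"
proof (cases "w \<in> W ` space M")
  case False
  then have "W -` {w} \<inter> space M = {}" by auto
  then show ?thesis by simp
qed (auto simp: simple_function_def)

lemma pr_group:
  assumes "prob_space M" "simple_function M W"
  shows "(\<Sum>w\<in>{w\<in>W`space M. \<pi> w = u}. pr M W w) = pr M (\<lambda>x. \<pi> (W x)) u"
proof -
  interpret prob_space M by fact
  have fin: "finite (W ` space M)" using assms(2) by (simp add: simple_function_def)
  have "(\<lambda>x. \<pi> (W x)) -` {u} \<inter> space M = (\<Union>w\<in>{w\<in>W`space M. \<pi> w = u}. W -` {w} \<inter> space M)"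
    by auto
  then have "pr M (\<lambda>x. \<pi> (W x)) u = measure M (\<Union>w\<in>{w\<in>W`space M. \<pi> w = u}. W -` {w} \<inter> space M)"
    by (simp add: pr_def)
  also have "\<dots> = (\<Sum>w\<in>{w\<in>W`space M. \<pi> w = u}. measure M (W -` {w} \<inter> space M))"
    by (rule measure_finite_Union) (use fin sf_level_sets[OF assms(2)] in \<open>auto simp: disjoint_family_on_def\<close>)
  finally show ?thesis by (simp add: pr_def)
qed

lemma sum_group:
  assumes "prob_space M" "simple_function M W"
  shows "(\<Sum>w\<in>W`space M. g (\<pi> w) * pr M W w) = (\<Sum>u\<in>(\<lambda>x. \<pi> (W x))`space M. g u * pr M (\<lambda>x. \<pi> (W x)) u)"
proof -
  have fin: "finite (W ` space M)" using assms(2) by (simp add: simple_function_def)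
  have "(\<Sum>w\<in>W`space M. g (\<pi> w) * pr M W w) = (\<Sum>u\<in>\<pi> ` (W`space M). \<Sum>w\<in>{w\<in>W`space M. \<pi> w = u}. g (\<pi> w) * pr M W w)"
    by (rule sum.image_gen[OF fin])
  also have "\<dots> = (\<Sum>u\<in>\<pi> ` (W`space M). g u * (\<Sum>w\<in>{w\<in>W`space M. \<pi> w = u}. pr M W w))"
    by (rule sum.cong) (auto simp: sum_distrib_left)
  also have "\<dots> = (\<Sum>u\<in>(\<lambda>x. \<pi> (W x))`space M. g u * pr M (\<lambda>x. \<pi> (W x)) u)"
    by (simp add: pr_group[OF assms] image_image)
  finally show ?thesis .
qed

lemma pr_proj_ge:
  assumes "prob_space M" "simple_function M W" "simple_function M (\<lambda>x. \<pi> (W x))"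
  shows "pr M W w \<le> pr M (\<lambda>x. \<pi> (W x)) (\<pi> w)"
proof -
  interpret prob_space M by fact
  show ?thesis unfolding pr_def
    by (rule finite_measure_mono) (use sf_level_sets[OF assms(3)] in auto)
qed

lemma HH_alt: "HH M W = - (\<Sum>w\<in>W`space M. ln (pr M W w) * pr M W w)"
  by (simp add: HH_def entr_fun_alt sum_negf mult.commute)

lemma HH_submod:
  assumes P: "prob_space M" and X: "simple_function M X" and Y: "simple_function M Y" and Z: "simple_function M Z"
  shows "HH M (\<lambda>x. (X x, Y x, Z x)) + HH M Z \<le> HH M (\<lambda>x. (X x, Z x)) + HH M (\<lambda>x. (Y x, Z x))"
proof -
  interpret information_space M "exp 1"
    using assms(1) by (simp add: information_space_def information_space_axioms_def)
  note XZ = simple_function_Pair[OF X Z]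
  note YZ = simple_function_Pair[OF Y Z]
  note XYZ = simple_function_Pair[OF X YZ]
  let ?W = "\<lambda>x. (X x, Y x, Z x)"
  let ?p = "pr M ?W"
  let ?pxz = "pr M (\<lambda>x. (X x, Z x))"
  let ?pyz = "pr M (\<lambda>x. (Y x, Z x))"
  let ?pz = "pr M Z"
  have sd: "simple_distributed M V (pr M V)" if "simple_function M V" for V :: "_ \<Rightarrow> 'z"
    by (rule simple_distributedI[OF that]) (auto simp: pr_def)
  have "0 \<le> conditional_mutual_information (exp 1)
    (count_space (X ` space M)) (count_space (Y ` space M)) (count_space (Z ` space M)) X Y Z"
    by (rule conditional_mutual_information_nonneg[OF X Y Z])
  also have "\<dots> = (\<Sum>(x, y, z)\<in>?W`space M. ?p (x, y, z) * log (exp 1) (?p (x, y, z) / (?pxz (x, z) * (?pyz (y,z) / ?pz z))))"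
    by (rule conditional_mutual_information_eq[OF sd[OF Z] sd[OF YZ] sd[OF XZ] sd[OF XYZ]])
  also have "\<dots> = (\<Sum>w\<in>?W`space M. ln (?p w) * ?p w) - (\<Sum>w\<in>?W`space M. ln (?pxz ((\<lambda>(x,y,z). (x,z)) w)) * ?p w)
       - (\<Sum>w\<in>?W`space M. ln (?pyz ((\<lambda>(x,y,z). (y,z)) w)) * ?p w) + (\<Sum>w\<in>?W`space M. ln (?pz ((\<lambda>(x,y,z). z) w)) * ?p w)"
  proof -
    have "?p (x, y, z) * log (exp 1) (?p (x, y, z) / (?pxz (x, z) * (?pyz (y,z) / ?pz z)))
      = ln (?p (x,y,z)) * ?p (x,y,z) - ln (?pxz (x,z)) * ?p (x,y,z) - ln (?pyz (y,z)) * ?p (x,y,z) + ln (?pz z) * ?p (x,y,z)"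
      for x y z
    proof (cases "?p (x,y,z) = 0")
      case True then show ?thesis by simp
    next
      case False
      then have p0: "0 < ?p (x,y,z)" using pr_nonneg[of M ?W] by (simp add: less_le)
      have "?p (x,y,z) \<le> ?pxz (x,z)"
        using pr_proj_ge[OF P XYZ, of "\<lambda>(x,y,z). (x,z)" "(x,y,z)"] XZ by simp
      then have a: "0 < ?pxz (x,z)" using p0 by simp
      have "?p (x,y,z) \<le> ?pyz (y,z)"
        using pr_proj_ge[OF P XYZ, of "\<lambda>(x,y,z). (y,z)" "(x,y,z)"] YZ by simp
      then have b: "0 < ?pyz (y,z)" using p0 by simp
      have "?p (x,y,z) \<le> ?pz z"
        using pr_proj_ge[OF P XYZ, of "\<lambda>(x,y,z). z" "(x,y,z)"] Z by simp
      then have c: "0 < ?pz z" using p0 by simp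
      show ?thesis using p0 a b c
        by (simp add: log_def ln_div ln_mult algebra_simps)
    qed
    then show ?thesis
      by (simp add: split_beta' sum_subtractf[symmetric] sum.distrib[symmetric])
  qed
  also have "\<dots> = - HH M ?W + HH M (\<lambda>x. (X x, Z x)) + HH M (\<lambda>x. (Y x, Z x)) - HH M Z"
    unfolding HH_alt
    by (simp add: sum_group[OF P XYZ, of "\<lambda>u. ln (?pxz u)"] sum_group[OF P XYZ, of "\<lambda>u. ln (?pyz u)"]
        sum_group[OF P XYZ, of "\<lambda>u. ln (?pz u)"] split_beta')
  finally show ?thesis by simp
qed

definition lab :: "'b set set \<Rightarrow> 'b \<Rightarrow> 'b set" where
  "lab \<xi> x = (THE C. C \<in> \<xi> \<and> x \<in> C)"

lemma lab:
  assumes "fin_partition M \<xi>" "x \<in> space M"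
  shows "lab \<xi> x \<in> \<xi> \<and> x \<in> lab \<xi> x"
proof -
  have ex: "\<exists>C. C \<in> \<xi> \<and> x \<in> C" using assms by (auto simp: fin_partition_def)
  have "\<exists>!C. C \<in> \<xi> \<and> x \<in> C"
  proof (rule ex_ex1I[OF ex])
    fix C D assume "C \<in> \<xi> \<and> x \<in> C" "D \<in> \<xi> \<and> x \<in> D"
    then show "C = D" using assms(1) unfolding fin_partition_def by blast
  qed
  then show ?thesis unfolding lab_def by (rule theI')
qed

lemma lab_eq:
  assumes "fin_partition M \<xi>" "x \<in> space M" "C \<in> \<xi>"
  shows "x \<in> C \<longleftrightarrow> lab \<xi> x = C"
  using lab[OF assms(1,2)] assms unfolding fin_partition_def by blast

lemma sf_lab:
  assumes "fin_partition M \<xi>"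
  shows "simple_function M (lab \<xi>)"
  unfolding simple_function_def
proof safe
  have "lab \<xi> ` space M \<subseteq> \<xi>" using lab[OF assms] by auto
  then show "finite (lab \<xi> ` space M)" using assms by (auto simp: fin_partition_def intro: finite_subset)
next
  fix x assume x: "x \<in> space M"
  have "lab \<xi> -` {lab \<xi> x} \<inter> space M = lab \<xi> x"
  proof -
    have "lab \<xi> x \<subseteq> space M" using lab[OF assms x] assms by (auto simp: fin_partition_def)
    then show ?thesis using lab_eq[OF assms _ lab[OF assms x, THEN conjunct1]] by auto
  qed
  then show "lab \<xi> -` {lab \<xi> x} \<inter> space M \<in> sets M"
    using lab[OF assms x] assms by (auto simp: fin_partition_def)
qed

definition mpres :: "'b measure \<Rightarrow> ('b \<Rightarrow> 'b) \<Rightarrow> bool" where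
  "mpres M S \<longleftrightarrow> S \<in> measurable M M \<and> (\<forall>A\<in>sets M. measure M (S -` A \<inter> space M) = measure M A)"

lemma mpres_fiter:
  assumes "\<And>n. mpres M (T n)"
  shows "mpres M (fiter T i m)"
proof (induction m)
  case 0
  show ?case by (auto simp: mpres_def sets.sets_into_space Int_absorb2)
next
  case (Suc m)
  let ?S = "fiter T i m"
  have mS: "?S \<in> measurable M M" using Suc by (simp add: mpres_def)
  have mT: "T (i+m) \<in> measurable M M" using assms by (simp add: mpres_def)
  have "(T (i + m) \<circ> ?S) -` A \<inter> space M = ?S -` (T (i+m) -` A \<inter> space M) \<inter> space M" for A
    using measurable_space[OF mS] by auto
  moreover have "T (i+m) -` A \<inter> space M \<in> sets M" if "A \<in> sets M" for A
    using measurable_sets[OF mT that] .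
  ultimately have "\<forall>A\<in>sets M. measure M ((T (i + m) \<circ> ?S) -` A \<inter> space M) = measure M A"
    using Suc assms unfolding mpres_def by metis
  then show ?case using measurable_comp[OF mS mT]
    by (simp add: mpres_def comp_def)
qed

lemma HH_comp_mpres:
  assumes P: "prob_space M" and S: "mpres M S" and X: "simple_function M X"
  shows "HH M (\<lambda>x. X (S x)) = HH M X"
proof -
  have mS: "S \<in> measurable M M" using S by (simp add: mpres_def)
  have prq: "pr M (\<lambda>x. X (S x)) v = pr M X v" for v
  proof -
    have "(\<lambda>x. X (S x)) -` {v} \<inter> space M = S -` (X -` {v} \<inter> space M) \<inter> space M"
      using measurable_space[OF mS] by auto
    moreover have "measure M (S -` (X -` {v} \<inter> space M) \<inter> space M) = measure M (X -` {v} \<inter> space M)"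
      using S sf_level_sets[OF X] unfolding mpres_def by blast
    ultimately show ?thesis unfolding pr_def by simp
  qed
  have sub: "(\<lambda>x. X (S x)) ` space M \<subseteq> X ` space M" using measurable_space[OF mS] by auto
  have fin: "finite (X ` space M)" using X by (simp add: simple_function_def)
  have "HH M (\<lambda>x. X (S x)) = (\<Sum>v\<in>(\<lambda>x. X (S x)) ` space M. entr_fun (pr M X v))"
    by (simp add: HH_def prq)
  also have "\<dots> = (\<Sum>v\<in>X ` space M. entr_fun (pr M X v))"
  proof (rule sum.mono_neutral_left[OF fin sub])
    show "\<forall>v\<in>X ` space M - (\<lambda>x. X (S x)) ` space M. entr_fun (pr M X v) = 0"
    proof
      fix v assume "v \<in> X ` space M - (\<lambda>x. X (S x)) ` space M"
      then have v: "v \<notin> (\<lambda>x. X (S x)) ` space M" by simp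
      have "(\<lambda>x. X (S x)) -` {v} \<inter> space M = {}"
      proof (rule ccontr)
        assume "(\<lambda>x. X (S x)) -` {v} \<inter> space M \<noteq> {}"
        then obtain y where "y \<in> space M" "X (S y) = v" by auto
        then have "v \<in> (\<lambda>x. X (S x)) ` space M" by auto
        with v show False by simp
      qed
      then have "pr M X v = 0" using prq[of v] by (simp add: pr_def)
      then show "entr_fun (pr M X v) = 0" by (simp add: entr_fun_def)
    qed
  qed
  finally show ?thesis by (simp add: HH_def)
qed

definition SV :: "'b set set \<Rightarrow> (nat \<Rightarrow> 'b \<Rightarrow> 'b) \<Rightarrow> (nat \<Rightarrow> nat) \<Rightarrow> nat \<Rightarrow> 'b \<Rightarrow> 'b set list" where
  "SV \<xi> T a n x = map (\<lambda>i. lab \<xi> (fiter T 0 (a i) x)) [0..<n]"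

lemma SV_0: "SV \<xi> T a 0 = (\<lambda>x. [])" by (rule ext) (simp add: SV_def)

lemma SV_Suc: "SV \<xi> T a (Suc n) x = SV \<xi> T a n x @ [lab \<xi> (fiter T 0 (a n) x)]"
  by (simp add: SV_def)

lemma sf_SV:
  assumes "fin_partition M \<xi>" "\<And>m. fiter T 0 m \<in> measurable M M"
  shows "simple_function M (SV \<xi> T a n)"
proof (induction n)
  case 0
  then show ?case by (simp add: SV_def)
next
  case (Suc n)
  have "simple_function M (\<lambda>x. lab \<xi> (fiter T 0 (a n) x))"
    by (rule simple_function_comp[OF assms(2) sf_lab[OF assms(1)]])
  from simple_function_compose2[OF Suc.IH this, of "\<lambda>l e. l @ [e]"]
  have "simple_function M (\<lambda>x. SV \<xi> T a n x @ [lab \<xi> (fiter T 0 (a n) x)])" .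
  moreover have "SV \<xi> T a (Suc n) = (\<lambda>x. SV \<xi> T a n x @ [lab \<xi> (fiter T 0 (a n) x)])"
    by (rule ext) (rule SV_Suc)
  ultimately show ?case by simp
qed

lemma seq_join_SV:
  assumes xi: "fin_partition M \<xi>" and sp: "\<And>m x. x \<in> space M \<Longrightarrow> fiter T 0 m x \<in> space M"
  shows "seq_join M T a \<xi> n = (\<lambda>v. SV \<xi> T a n -` {v} \<inter> space M) ` (SV \<xi> T a n ` space M)"
proof -
  have key: "y \<in> space M \<inter> (\<Inter>i\<in>{..<n}. fiter T 0 (a i) -` (c i)) \<longleftrightarrow>
       y \<in> space M \<and> (\<forall>i<n. lab \<xi> (fiter T 0 (a i) y) = c i)"
    if "\<forall>i<n. c i \<in> \<xi>" for c y
  proof (cases "y \<in> space M")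
    case True
    have "\<forall>i<n. (fiter T 0 (a i) y \<in> c i) = (lab \<xi> (fiter T 0 (a i) y) = c i)"
      using lab_eq[OF xi sp[OF True]] that by blast
    then show ?thesis using True by auto
  qed simp
  have SVeq: "SV \<xi> T a n y = SV \<xi> T a n x \<longleftrightarrow> (\<forall>i<n. lab \<xi> (fiter T 0 (a i) y) = lab \<xi> (fiter T 0 (a i) x))"
    for x y by (auto simp: SV_def map_eq_conv)
  show ?thesis
  proof (intro set_eqI iffI)
    fix D assume "D \<in> seq_join M T a \<xi> n"
    then obtain c where c: "\<forall>i<n. c i \<in> \<xi>" and D: "D = space M \<inter> (\<Inter>i\<in>{..<n}. fiter T 0 (a i) -` (c i))"
      and ne: "D \<noteq> {}" by (auto simp: seq_join_def)
    then obtain x where x: "x \<in> D" by auto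
    then have x': "x \<in> space M" "\<forall>i<n. lab \<xi> (fiter T 0 (a i) x) = c i" using key[OF c] D by auto
    have "D = SV \<xi> T a n -` {SV \<xi> T a n x} \<inter> space M"
    proof (intro set_eqI)
      fix y show "y \<in> D \<longleftrightarrow> y \<in> SV \<xi> T a n -` {SV \<xi> T a n x} \<inter> space M"
        unfolding D key[OF c] using SVeq[of y x] x'(2) by auto
    qed
    then show "D \<in> (\<lambda>v. SV \<xi> T a n -` {v} \<inter> space M) ` (SV \<xi> T a n ` space M)" using x' by auto
  next
    fix D assume "D \<in> (\<lambda>v. SV \<xi> T a n -` {v} \<inter> space M) ` (SV \<xi> T a n ` space M)"
    then obtain x where x: "x \<in> space M" and D: "D = SV \<xi> T a n -` {SV \<xi> T a n x} \<inter> space M" by auto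
    define c where "c i = lab \<xi> (fiter T 0 (a i) x)" for i
    have c: "\<forall>i<n. c i \<in> \<xi>" using lab[OF xi sp[OF x]] by (simp add: c_def)
    have "D = space M \<inter> (\<Inter>i\<in>{..<n}. fiter T 0 (a i) -` (c i))"
    proof (intro set_eqI)
      fix y show "y \<in> D \<longleftrightarrow> y \<in> space M \<inter> (\<Inter>i\<in>{..<n}. fiter T 0 (a i) -` (c i))"
        unfolding D key[OF c] using SVeq[of y x] by (auto simp: c_def)
    qed
    moreover have "D \<noteq> {}" using x D by auto
    ultimately show "D \<in> seq_join M T a \<xi> n" using c by (auto simp: seq_join_def)
  qed
qed

lemma part_entropy_SV:
  assumes xi: "fin_partition M \<xi>" and sp: "\<And>m x. x \<in> space M \<Longrightarrow> fiter T 0 m x \<in> space M"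
  shows "part_entropy M (seq_join M T a \<xi> n) = HH M (SV \<xi> T a n)"
proof -
  let ?V = "SV \<xi> T a n"
  have inj: "inj_on (\<lambda>v. ?V -` {v} \<inter> space M) (?V ` space M)"
  proof (rule inj_onI)
    fix v w assume "v \<in> ?V ` space M" "w \<in> ?V ` space M" "?V -` {v} \<inter> space M = ?V -` {w} \<inter> space M"
    then show "v = w" by blast
  qed
  have "part_entropy M (seq_join M T a \<xi> n) = (\<Sum>C\<in>(\<lambda>v. ?V -` {v} \<inter> space M) ` (?V ` space M). entr_fun (measure M C))"
    unfolding part_entropy_def using seq_join_SV[OF assms] by simp
  also have "\<dots> = (\<Sum>v\<in>?V ` space M. entr_fun (measure M (?V -` {v} \<inter> space M)))"
    by (subst sum.reindex[OF inj]) (simp add: comp_def)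
  finally show ?thesis by (simp add: HH_def pr_def)
qed

lemma mpres_meas: "mpres M S \<Longrightarrow> S \<in> measurable M M" by (simp add: mpres_def)

lemma SV_pair_bound:
  assumes P: "prob_space M" and mp: "\<And>n. mpres M (T n)"
    and ze: "fin_partition M \<zeta>" and et: "fin_partition M \<eta>"
  shows "HH M (\<lambda>x. (SV \<zeta> T a n x, SV \<eta> T a n x)) - HH M (SV \<eta> T a n)
     \<le> real n * (HH M (\<lambda>x. (lab \<zeta> x, lab \<eta> x)) - HH M (lab \<eta>))"
proof (induction n)
  case 0
  have "HH M (\<lambda>x. (SV \<zeta> T a 0 x, SV \<eta> T a 0 x)) = HH M (SV \<eta> T a 0)"
    by (rule HH_cong[OF P]) (auto simp: SV_0)
  then show ?case by simp
next
  case (Suc n)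
  have mf: "\<And>m. fiter T 0 m \<in> measurable M M" using mpres_fiter[of M T 0, OF mp] by (simp add: mpres_def)
  let ?S = "fiter T 0 (a n)"
  define A where "A = SV \<zeta> T a n"
  define B where "B = SV \<eta> T a n"
  define a' where "a' = (\<lambda>x. lab \<zeta> (?S x))"
  define b' where "b' = (\<lambda>x. lab \<eta> (?S x))"
  have sA: "simple_function M A" unfolding A_def by (rule sf_SV[OF ze mf])
  have sB: "simple_function M B" unfolding B_def by (rule sf_SV[OF et mf])
  have sa: "simple_function M a'" unfolding a'_def by (rule simple_function_comp[OF mf sf_lab[OF ze]])
  have sb: "simple_function M b'" unfolding b'_def by (rule simple_function_comp[OF mf sf_lab[OF et]])
  note sf = sA sB sa sb simple_function_Pair
  have sSz: "simple_function M (SV \<zeta> T a (Suc n))" by (rule sf_SV[OF ze mf])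
  have sSe: "simple_function M (SV \<eta> T a (Suc n))" by (rule sf_SV[OF et mf])
  have e1: "HH M (\<lambda>x. (SV \<zeta> T a (Suc n) x, SV \<eta> T a (Suc n) x)) = HH M (\<lambda>x. (A x, a' x, (B x, b' x)))"
    by (rule HH_cong[OF P simple_function_Pair[OF sSz sSe]]) (simp add: sf, auto simp: SV_Suc A_def B_def a'_def b'_def)
  have e2: "HH M (SV \<eta> T a (Suc n)) = HH M (\<lambda>x. (B x, b' x))"
    by (rule HH_cong[OF P sSe]) (simp add: sf, auto simp: SV_Suc B_def b'_def)
  have s1: "HH M (\<lambda>x. (A x, a' x, (B x, b' x))) + HH M (\<lambda>x. (B x, b' x))
      \<le> HH M (\<lambda>x. (A x, (B x, b' x))) + HH M (\<lambda>x. (a' x, (B x, b' x)))"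
    by (rule HH_submod[OF P sA sa]) (simp add: sf)
  have s2: "HH M (\<lambda>x. (A x, b' x, B x)) + HH M B \<le> HH M (\<lambda>x. (A x, B x)) + HH M (\<lambda>x. (b' x, B x))"
    by (rule HH_submod[OF P sA sb sB])
  have s3: "HH M (\<lambda>x. (a' x, B x, b' x)) + HH M b' \<le> HH M (\<lambda>x. (a' x, b' x)) + HH M (\<lambda>x. (B x, b' x))"
    by (rule HH_submod[OF P sa sB sb])
  have c1: "HH M (\<lambda>x. (A x, (B x, b' x))) = HH M (\<lambda>x. (A x, b' x, B x))"
    by (rule HH_cong[OF P]) (auto simp: sf)
  have c2: "HH M (\<lambda>x. (b' x, B x)) = HH M (\<lambda>x. (B x, b' x))"
    by (rule HH_cong[OF P]) (auto simp: sf)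
  have i1: "HH M (\<lambda>x. (a' x, b' x)) = HH M (\<lambda>x. (lab \<zeta> x, lab \<eta> x))"
    unfolding a'_def b'_def
    by (rule HH_comp_mpres[OF P mpres_fiter[of M T 0, OF mp], of "\<lambda>x. (lab \<zeta> x, lab \<eta> x)", simplified])
       (simp add: sf_lab[OF ze] sf_lab[OF et])
  have i2: "HH M b' = HH M (lab \<eta>)"
    unfolding b'_def by (rule HH_comp_mpres[OF P mpres_fiter[of M T 0, OF mp] sf_lab[OF et]])
  have IH: "HH M (\<lambda>x. (A x, B x)) - HH M B \<le> real n * (HH M (\<lambda>x. (lab \<zeta> x, lab \<eta> x)) - HH M (lab \<eta>))"
    using Suc.IH by (simp add: A_def B_def)
  show ?case using e1 e2 s1 s2 s3 c1 c2 i1 i2 IH by (simp add: algebra_simps)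
qed

lemma HH_Hc_nonneg:
  assumes P: "prob_space M" and ze: "fin_partition M \<zeta>" and et: "fin_partition M \<eta>"
  shows "HH M (lab \<eta>) \<le> HH M (\<lambda>x. (lab \<zeta> x, lab \<eta> x))"
  by (rule HH_mono[OF P]) (auto simp: sf_lab[OF ze] sf_lab[OF et])

lemma part_entropy_bound:
  assumes P: "prob_space M" and mp: "\<And>n. mpres M (T n)"
    and ze: "fin_partition M \<zeta>" and et: "fin_partition M \<eta>"
  shows "part_entropy M (seq_join M T a \<zeta> n) \<le> part_entropy M (seq_join M T a \<eta> n)
     + real n * (HH M (\<lambda>x. (lab \<zeta> x, lab \<eta> x)) - HH M (lab \<eta>))"
proof -
  have mf: "\<And>m. fiter T 0 m \<in> measurable M M" using mpres_fiter[of M T 0, OF mp] by (simp add: mpres_def)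
  have sp: "\<And>m x. x \<in> space M \<Longrightarrow> fiter T 0 m x \<in> space M" using measurable_space[OF mf] by blast
  have "HH M (SV \<zeta> T a n) \<le> HH M (\<lambda>x. (SV \<zeta> T a n x, SV \<eta> T a n x))"
    by (rule HH_mono[OF P]) (auto simp: sf_SV[OF ze mf] sf_SV[OF et mf])
  then show ?thesis
    using SV_pair_bound[of M T, OF P mp ze et, of a n] part_entropy_SV[OF ze sp] part_entropy_SV[OF et sp] by simp
qed

lemma seq_entropy_part_bound:
  assumes P: "prob_space M" and mp: "\<And>n. mpres M (T n)"
    and ze: "fin_partition M \<zeta>" and et: "fin_partition M \<eta>"
  shows "seq_entropy_part M T a \<zeta> \<le> seq_entropy_part M T a \<eta>
     + ereal (HH M (\<lambda>x. (lab \<zeta> x, lab \<eta> x)) - HH M (lab \<eta>))"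
proof -
  define c where "c = HH M (\<lambda>x. (lab \<zeta> x, lab \<eta> x)) - HH M (lab \<eta>)"
  have c0: "0 \<le> c" using HH_Hc_nonneg[OF P ze et] by (simp add: c_def)
  have pt: "ereal (part_entropy M (seq_join M T a \<zeta> n) / real n) \<le> ereal (part_entropy M (seq_join M T a \<eta> n) / real n) + ereal c" for n
  proof (cases "n = 0")
    case True then show ?thesis using c0 by simp
  next
    case False
    then have "part_entropy M (seq_join M T a \<zeta> n) / real n \<le> (part_entropy M (seq_join M T a \<eta> n) + real n * c) / real n"
      using part_entropy_bound[of M T, OF P mp ze et, of a n] by (simp add: c_def divide_right_mono)
    also have "\<dots> = part_entropy M (seq_join M T a \<eta> n) / real n + c" using False by (simp add: field_simps)
    finally show ?thesis by simp
  qed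
  have "seq_entropy_part M T a \<zeta> \<le> limsup (\<lambda>n. ereal (part_entropy M (seq_join M T a \<eta> n) / real n) + ereal c)"
    unfolding seq_entropy_part_def by (rule Limsup_mono) (use pt in simp)
  also have "\<dots> \<le> seq_entropy_part M T a \<eta> + limsup (\<lambda>n. ereal c)"
    unfolding seq_entropy_part_def by (rule ereal_limsup_add_mono)
  also have "limsup (\<lambda>n. ereal c) = ereal c" by (simp add: Limsup_const)
  finally show ?thesis by (simp add: c_def)
qed

lemma prob_pred:
  assumes "prob_space M" "simple_function M W"
  shows "measure M {x\<in>space M. Q (W x)} = (\<Sum>w\<in>{w\<in>W`space M. Q w}. pr M W w)"
proof -
  have "(\<Sum>w\<in>{w\<in>W`space M. Q w = True}. pr M W w) = pr M (\<lambda>x. Q (W x)) True"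
    by (rule pr_group[OF assms])
  moreover have "(\<lambda>x. Q (W x)) -` {True} \<inter> space M = {x\<in>space M. Q (W x)}" by auto
  ultimately show ?thesis by (simp add: pr_def)
qed

lemma pr_total:
  assumes "prob_space M" "simple_function M W"
  shows "(\<Sum>w\<in>W`space M. pr M W w) = 1"
proof -
  have "measure M {x\<in>space M. True} = 1"
    using prob_space.prob_space[OF assms(1)] by simp
  then show ?thesis using prob_pred[OF assms, of "\<lambda>_. True"] by simp
qed

lemma ln_bound_c:
  fixes e g c :: real
  assumes "0 < e" "e \<le> g" "0 < c"
  shows "e * (ln g - ln e) \<le> c * g + e * ln (1 / c)"
proof -
  have g: "0 < g" using assms by simp
  have "ln (c * g / e) \<le> c * g / e - 1" by (rule ln_le_minus_one) (use assms g in simp)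
  then have "ln c + ln g - ln e \<le> c * g / e - 1" using assms g by (simp add: ln_div ln_mult)
  then have "e * (ln c + ln g - ln e) \<le> e * (c * g / e - 1)" using assms by (intro mult_left_mono) auto
  then have "e * (ln g - ln e) \<le> c * g - e - e * ln c" using assms by (simp add: algebra_simps)
  then show ?thesis using assms by (simp add: ln_div)
qed

lemma ln_bound_1:
  fixes e g :: real
  assumes "0 < e" "e \<le> g"
  shows "e * (ln g - ln e) \<le> g - e"
proof -
  have g: "0 < g" using assms by simp
  have "ln (g / e) \<le> g / e - 1" by (rule ln_le_minus_one) (use assms g in simp)
  then have "e * ln (g / e) \<le> e * (g / e - 1)" using assms by (intro mult_left_mono) auto
  then show ?thesis using assms g by (simp add: ln_div algebra_simps)
qed

lemma Hc_bound:
  assumes P: "prob_space M" and X: "simple_function M X" and Y: "simple_function M Y" and c: "0 < c"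
  shows "HH M (\<lambda>x. (X x, Y x)) - HH M Y \<le> measure M {x\<in>space M. X x \<noteq> sel (Y x)} * (1 + ln (1 / c))
      + c * card (X ` space M)"
proof -
  let ?W = "\<lambda>x. (X x, Y x)"
  let ?p = "pr M ?W"
  let ?q = "pr M Y"
  let ?L = "ln (1 / c)"
  define D where "D = measure M {x\<in>space M. X x \<noteq> sel (Y x)}"
  note W = simple_function_Pair[OF X Y]
  have finW: "finite (?W ` space M)" using W by (simp add: simple_function_def)
  have finX: "finite (X ` space M)" using X by (simp add: simple_function_def)
  have finY: "finite (Y ` space M)" using Y by (simp add: simple_function_def)
  define W1 where "W1 = {w\<in>?W ` space M. fst w = sel (snd w)}"
  define W2 where "W2 = {w\<in>?W ` space M. fst w \<noteq> sel (snd w)}"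
  have HY: "HH M Y = - (\<Sum>w\<in>?W ` space M. ln (?q (snd w)) * ?p w)"
    unfolding HH_alt using sum_group[OF P W, of "\<lambda>v. ln (?q v)" snd] by simp
  have HW: "HH M ?W = - (\<Sum>w\<in>?W ` space M. ln (?p w) * ?p w)" by (rule HH_alt)
  have "HH M ?W - HH M Y = (\<Sum>w\<in>?W ` space M. ln (?q (snd w)) * ?p w) - (\<Sum>w\<in>?W ` space M. ln (?p w) * ?p w)"
    by (simp only: HW HY diff_minus_eq_add)
  also have "\<dots> = (\<Sum>w\<in>?W ` space M. ?p w * (ln (?q (snd w)) - ln (?p w)))"
    by (simp add: sum_subtractf[symmetric] algebra_simps)
  also have "\<dots> \<le> (\<Sum>w\<in>?W ` space M. if fst w = sel (snd w) then ?q (snd w) - ?p w else c * ?q (snd w) + ?p w * ?L)"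
  proof (rule sum_mono)
    fix w assume w: "w \<in> ?W ` space M"
    have le: "?p w \<le> ?q (snd w)"
      using pr_proj_ge[OF P W, of snd w] Y by simp
    show "?p w * (ln (?q (snd w)) - ln (?p w)) \<le> (if fst w = sel (snd w) then ?q (snd w) - ?p w else c * ?q (snd w) + ?p w * ?L)"
    proof (cases "?p w = 0")
      case True
      then show ?thesis using le c pr_nonneg[of M Y "snd w"] by simp
    next
      case False
      then have "0 < ?p w" using pr_nonneg[of M ?W w] by (simp add: less_le)
      then show ?thesis using ln_bound_1[OF _ le] ln_bound_c[OF _ le c] by (simp add: mult.commute)
    qed
  qed
  also have "\<dots> = (\<Sum>w\<in>W1. ?q (snd w) - ?p w) + (\<Sum>w\<in>W2. c * ?q (snd w) + ?p w * ?L)"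
    unfolding W1_def W2_def by (simp add: sum.If_cases[OF finW] Int_def Collect_conj_eq[symmetric] conj_commute)
  also have "\<dots> = (\<Sum>w\<in>W1. ?q (snd w)) - (\<Sum>w\<in>W1. ?p w) + c * (\<Sum>w\<in>W2. ?q (snd w)) + (\<Sum>w\<in>W2. ?p w) * ?L"
    by (simp add: sum_subtractf sum.distrib sum_distrib_left sum_distrib_right)
  also have "(\<Sum>w\<in>W2. ?p w) = D"
    unfolding D_def W2_def using prob_pred[OF P W, of "\<lambda>w. fst w \<noteq> sel (snd w)"] by simp
  also have "(\<Sum>w\<in>W1. ?p w) = 1 - D"
  proof -
    have "W1 \<union> W2 = ?W ` space M" "W1 \<inter> W2 = {}" by (auto simp: W1_def W2_def)
    then have "(\<Sum>w\<in>W1. ?p w) + (\<Sum>w\<in>W2. ?p w) = 1"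
      using pr_total[OF P W] sum.union_disjoint[of W1 W2 ?p] finW
      by (metis finite_Un)
    then show ?thesis using \<open>(\<Sum>w\<in>W2. ?p w) = D\<close> by simp
  qed
  also have "(\<Sum>w\<in>W1. ?q (snd w)) \<le> 1"
  proof -
    have inj: "inj_on snd W1" by (auto simp: W1_def inj_on_def prod_eq_iff)
    have "(\<Sum>w\<in>W1. ?q (snd w)) = (\<Sum>v\<in>snd ` W1. ?q v)" by (simp add: sum.reindex[OF inj])
    also have "\<dots> \<le> (\<Sum>v\<in>Y ` space M. ?q v)"
      by (rule sum_mono2[OF finY]) (auto simp: W1_def pr_nonneg)
    also have "\<dots> = 1" by (rule pr_total[OF P Y])
    finally show ?thesis .
  qed
  also have "(\<Sum>w\<in>W2. ?q (snd w)) \<le> card (X ` space M)"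
  proof -
    have "(\<Sum>w\<in>W2. ?q (snd w)) \<le> (\<Sum>w\<in>X ` space M \<times> Y ` space M. ?q (snd w))"
      by (rule sum_mono2) (auto simp: W2_def finX finY pr_nonneg)
    also have "\<dots> = (\<Sum>u\<in>X ` space M. \<Sum>v\<in>Y ` space M. ?q v)"
      by (subst sum.cartesian_product) (simp add: split_beta')
    also have "\<dots> = card (X ` space M)" by (simp add: pr_total[OF P Y])
    finally show ?thesis .
  qed
  finally have "HH M ?W - HH M Y \<le> 1 - (1 - D) + c * card (X ` space M) + D * ?L"
    using c by (simp add: mult_left_mono)
  then show ?thesis by (simp add: D_def algebra_simps)
qed

lemma entr_nonneg_prod:
  fixes x :: "'i \<Rightarrow> real"
  assumes fin: "finite I" and nn: "\<And>j. j \<in> I \<Longrightarrow> 0 \<le> x j"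
  shows "entr_fun (\<Prod>j\<in>I. x j) = (\<Sum>l\<in>I. entr_fun (x l) * (\<Prod>j\<in>I - {l}. x j))"
proof (cases "\<exists>j\<in>I. x j = 0")
  case True
  then obtain j0 where j0: "j0 \<in> I" "x j0 = 0" by blast
  have "(\<Prod>j\<in>I. x j) = 0" using fin j0 by (auto simp: prod_zero_iff)
  moreover have "entr_fun (x l) * (\<Prod>j\<in>I - {l}. x j) = 0" if "l \<in> I" for l
  proof (cases "l = j0")
    case True then show ?thesis using j0 by (simp add: entr_fun_def)
  next
    case False
    then have "(\<Prod>j\<in>I - {l}. x j) = 0" using fin j0 by (auto simp: prod_zero_iff)
    then show ?thesis by simp
  qed
  ultimately show ?thesis by (simp add: entr_fun_def[of 0] sum.neutral)
next
  case False
  then have pos: "\<And>j. j \<in> I \<Longrightarrow> 0 < x j" using nn by (simp add: less_le)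
  have "entr_fun (\<Prod>j\<in>I. x j) = - (\<Prod>j\<in>I. x j) * (\<Sum>l\<in>I. ln (x l))"
  proof -
    have "ln (\<Prod>j\<in>I. x j) = (\<Sum>l\<in>I. ln (x l))"
      by (rule ln_prod[OF fin]) (use pos in force)
    then show ?thesis by (simp add: entr_fun_alt)
  qed
  also have "\<dots> = (\<Sum>l\<in>I. - (\<Prod>j\<in>I. x j) * ln (x l))" by (simp add: sum_distrib_left)
  also have "\<dots> = (\<Sum>l\<in>I. entr_fun (x l) * (\<Prod>j\<in>I - {l}. x j))"
  proof (rule sum.cong[OF refl])
    fix l assume "l \<in> I"
    then have "(\<Prod>j\<in>I. x j) = x l * (\<Prod>j\<in>I - {l}. x j)" using fin by (simp add: prod.remove)
    then show "- (\<Prod>j\<in>I. x j) * ln (x l) = entr_fun (x l) * (\<Prod>j\<in>I - {l}. x j)"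
      by (simp add: entr_fun_alt)
  qed
  finally show ?thesis .
qed

lemma sum_entr_PiE:
  fixes p :: "'s \<Rightarrow> real"
  assumes fin: "finite I" and finS: "finite S" and nn: "\<And>s. s \<in> S \<Longrightarrow> 0 \<le> p s" and tot: "(\<Sum>s\<in>S. p s) = 1"
  shows "(\<Sum>v\<in>PiE I (\<lambda>_. S). entr_fun (\<Prod>j\<in>I. p (v j))) = real (card I) * (\<Sum>s\<in>S. entr_fun (p s))"
proof -
  define g where "g l j s = (if j = l then entr_fun (p s) else p s)" for l j :: 'a and s
  have "(\<Sum>v\<in>PiE I (\<lambda>_. S). entr_fun (\<Prod>j\<in>I. p (v j)))
      = (\<Sum>v\<in>PiE I (\<lambda>_. S). \<Sum>l\<in>I. \<Prod>j\<in>I. g l j (v j))"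
  proof (rule sum.cong[OF refl])
    fix v assume v: "v \<in> PiE I (\<lambda>_. S)"
    have "entr_fun (\<Prod>j\<in>I. p (v j)) = (\<Sum>l\<in>I. entr_fun (p (v l)) * (\<Prod>j\<in>I - {l}. p (v j)))"
      by (rule entr_nonneg_prod[OF fin]) (use v nn in auto)
    also have "\<dots> = (\<Sum>l\<in>I. \<Prod>j\<in>I. g l j (v j))"
    proof (rule sum.cong[OF refl])
      fix l assume l: "l \<in> I"
      have "(\<Prod>j\<in>I. g l j (v j)) = g l l (v l) * (\<Prod>j\<in>I - {l}. g l j (v j))"
        using fin l by (simp add: prod.remove)
      also have "(\<Prod>j\<in>I - {l}. g l j (v j)) = (\<Prod>j\<in>I - {l}. p (v j))"
        by (rule prod.cong) (auto simp: g_def)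
      finally show "entr_fun (p (v l)) * (\<Prod>j\<in>I - {l}. p (v j)) = (\<Prod>j\<in>I. g l j (v j))"
        by (simp add: g_def)
    qed
    finally show "entr_fun (\<Prod>j\<in>I. p (v j)) = (\<Sum>l\<in>I. \<Prod>j\<in>I. g l j (v j))" .
  qed
  also have "\<dots> = (\<Sum>l\<in>I. \<Sum>v\<in>PiE I (\<lambda>_. S). \<Prod>j\<in>I. g l j (v j))" by (rule sum.swap)
  also have "\<dots> = (\<Sum>l\<in>I. \<Prod>j\<in>I. \<Sum>s\<in>S. g l j s)"
    by (rule sum.cong[OF refl]) (rule prod_sum_PiE[symmetric], use fin finS in auto)
  also have "\<dots> = (\<Sum>l\<in>I. \<Sum>s\<in>S. entr_fun (p s))"
  proof (rule sum.cong[OF refl])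
    fix l assume l: "l \<in> I"
    have "(\<Prod>j\<in>I. \<Sum>s\<in>S. g l j s) = (\<Sum>s\<in>S. g l l s) * (\<Prod>j\<in>I - {l}. \<Sum>s\<in>S. g l j s)"
      using fin l by (simp add: prod.remove)
    also have "(\<Prod>j\<in>I - {l}. \<Sum>s\<in>S. g l j s) = 1"
      by (rule prod.neutral) (auto simp: g_def tot)
    finally show "(\<Prod>j\<in>I. \<Sum>s\<in>S. g l j s) = (\<Sum>s\<in>S. entr_fun (p s))" by (simp add: g_def)
  qed
  also have "\<dots> = real (card I) * (\<Sum>s\<in>S. entr_fun (p s))" by simp
  finally show ?thesis .
qed

lemma HH_PiM:
  assumes P: "prob_space M" and V: "simple_function M V"
  shows "HH (PiM {..<k} (\<lambda>_. M)) (\<lambda>z. restrict (\<lambda>j. V (z j)) {..<k}) = real k * HH M V"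
proof -
  interpret PP: product_prob_space "\<lambda>_::nat. M" by (rule product_prob_spaceI) (rule P)
  interpret FP: finite_product_prob_space "\<lambda>_::nat. M" "{..<k}" by unfold_locales simp
  let ?N = "PiM {..<k} (\<lambda>_. M)"
  let ?V = "\<lambda>z. restrict (\<lambda>j. V (z j)) {..<k}"
  have spN: "space ?N = PiE {..<k} (\<lambda>_. space M)" by (simp add: space_PiM)
  have img: "?V ` space ?N = PiE {..<k} (\<lambda>_. V ` space M)"
  proof (intro set_eqI iffI)
    fix v assume "v \<in> ?V ` space ?N"
    then show "v \<in> PiE {..<k} (\<lambda>_. V ` space M)" using spN by (auto simp: PiE_iff)
  next
    fix v assume v: "v \<in> PiE {..<k} (\<lambda>_. V ` space M)"
    define z where "z = restrict (\<lambda>j. SOME x. x \<in> space M \<and> V x = v j) {..<k}"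
    have zj: "z j \<in> space M \<and> V (z j) = v j" if "j < k" for j
    proof -
      have "v j \<in> V ` space M" using v that by (auto simp: PiE_iff)
      then have "\<exists>x. x \<in> space M \<and> V x = v j" by auto
      then show ?thesis unfolding z_def using that by (simp add: someI_ex[OF \<open>\<exists>x. x \<in> space M \<and> V x = v j\<close>])
    qed
    have "z \<in> space ?N" using zj spN by (auto simp: z_def PiE_iff)
    moreover have "?V z = v" using zj v by (auto simp: PiE_iff extensional_def)
    ultimately show "v \<in> ?V ` space ?N" by (metis image_eqI)
  qed
  have prv: "pr ?N ?V v = (\<Prod>j\<in>{..<k}. pr M V (v j))" if v: "v \<in> PiE {..<k} (\<lambda>_. V ` space M)" for v
  proof -
    have "?V -` {v} \<inter> space ?N = PiE {..<k} (\<lambda>j. V -` {v j} \<inter> space M)"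
      using v unfolding spN by (auto simp: PiE_iff extensional_def fun_eq_iff)
    then show ?thesis
      unfolding pr_def by (simp add: FP.finite_measure_PiM_emb sf_level_sets[OF V])
  qed
  have "HH ?N ?V = (\<Sum>v\<in>PiE {..<k} (\<lambda>_. V ` space M). entr_fun (\<Prod>j\<in>{..<k}. pr M V (v j)))"
    unfolding HH_def img by (rule sum.cong[OF refl]) (simp add: prv)
  also have "\<dots> = real (card {..<k}) * (\<Sum>s\<in>V ` space M. entr_fun (pr M V s))"
    by (rule sum_entr_PiE) (use V pr_total[OF P V] in \<open>auto simp: simple_function_def pr_nonneg\<close>)
  finally show ?thesis by (simp add: HH_def)
qed

lemma sf_cong:
  assumes X: "simple_function M X"
    and eq: "\<And>x y. x \<in> space M \<Longrightarrow> y \<in> space M \<Longrightarrow> X x = X y \<longleftrightarrow> Y x = Y y"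
  shows "simple_function M Y"
  unfolding simple_function_def
proof safe
  define g where "g v = Y (SOME x. x \<in> space M \<and> X x = v)" for v
  have "Y x = g (X x)" if "x \<in> space M" for x
  proof -
    have "\<exists>y. y \<in> space M \<and> X y = X x" using that by blast
    then have "(SOME y. y \<in> space M \<and> X y = X x) \<in> space M \<and> X (SOME y. y \<in> space M \<and> X y = X x) = X x"
      by (rule someI_ex)
    then show ?thesis using eq[of x "SOME y. y \<in> space M \<and> X y = X x"] that by (simp add: g_def)
  qed
  then have "Y ` space M = g ` X ` space M" by (auto simp: image_iff)
  then show "finite (Y ` space M)" using X by (simp add: simple_function_def)
next
  fix x assume x: "x \<in> space M"
  have "Y -` {Y x} \<inter> space M = X -` {X x} \<inter> space M" using eq x by auto
  then show "Y -` {Y x} \<inter> space M \<in> sets M" using X x by (simp add: simple_function_def)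
qed

lemma HH_cong':
  assumes "prob_space M" "simple_function M X"
    and "\<And>x y. x \<in> space M \<Longrightarrow> y \<in> space M \<Longrightarrow> X x = X y \<longleftrightarrow> Y x = Y y"
  shows "HH M X = HH M Y"
  using HH_cong[OF assms(1,2) sf_cong[OF assms(2,3)] assms(3)] .

definition prodpart :: "nat \<Rightarrow> 'b set set \<Rightarrow> (nat \<Rightarrow> 'b) set set" where
  "prodpart k P = {PiE {..<k} C | C. \<forall>j<k. C j \<in> P}"

locale sysl =
  fixes f :: "nat \<Rightarrow> 'a::metric_space \<Rightarrow> 'a" and \<mu> :: "'a measure" and k :: nat
  assumes cont: "\<And>n. continuous_on UNIV (f n)" and P: "prob_space \<mu>"
    and sets_mu: "sets \<mu> = sets borel"
    and inv: "\<And>n B. B \<in> sets borel \<Longrightarrow> measure \<mu> (f n -` B) = measure \<mu> B"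
begin

abbreviation "\<nu> \<equiv> PiM {..<k} (\<lambda>_. \<mu>)"
abbreviation "TT \<equiv> (\<lambda>n x. restrict (\<lambda>i. f n (x i)) {..<k})"

lemma space_mu: "space \<mu> = UNIV"
  using sets_eq_imp_space_eq[OF sets_mu] by simp

lemma f_meas[measurable]: "f n \<in> measurable \<mu> \<mu>"
  using borel_measurable_continuous_onI[OF cont[of n]] measurable_cong_sets[OF sets_mu sets_mu] by simp

lemma mpres_f: "mpres \<mu> (f n)"
  unfolding mpres_def using f_meas inv sets_mu space_mu by simp

lemma distr_f: "distr \<mu> \<mu> (f n) = \<mu>"
proof (rule measure_eqI)
  fix A assume "A \<in> sets (distr \<mu> \<mu> (f n))"
  then have A: "A \<in> sets \<mu>" by simp
  interpret prob_space \<mu> by (rule P)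
  have "emeasure (distr \<mu> \<mu> (f n)) A = emeasure \<mu> (f n -` A \<inter> space \<mu>)"
    by (rule emeasure_distr[OF f_meas A])
  also have "\<dots> = emeasure \<mu> A"
    using mpres_f[of n] A by (simp add: mpres_def emeasure_eq_measure)
  finally show "emeasure (distr \<mu> \<mu> (f n)) A = emeasure \<mu> A" .
qed simp

lemma P_nu: "prob_space \<nu>"
  by (rule prob_space_PiM) (rule P)

lemma space_nu: "space \<nu> = PiE {..<k} (\<lambda>_. UNIV)"
  by (simp add: space_PiM space_mu)

lemma TT_meas: "TT n \<in> measurable \<nu> \<nu>"
  by measurable

lemma mpres_TT: "mpres \<nu> (TT n)"
proof -
  have "distr \<nu> \<nu> (compose {..<k} (f n)) = PiM {..<k} (\<lambda>_. distr \<mu> \<mu> (f n))"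
    by (rule distr_PiM_finite_prob_space') (use P in auto)
  moreover have "compose {..<k} (f n) = TT n" by (rule ext) (simp add: compose_def)
  ultimately have d: "distr \<nu> \<nu> (TT n) = \<nu>" by (simp add: distr_f)
  show ?thesis unfolding mpres_def
  proof (intro conjI TT_meas ballI)
    fix A assume "A \<in> sets \<nu>"
    then show "measure \<nu> (TT n -` A \<inter> space \<nu>) = measure \<nu> A"
      using measure_distr[OF TT_meas[of n], of A] d by simp
  qed
qed

lemma fiter_TT:
  assumes "z \<in> space \<nu>"
  shows "fiter TT i m z = restrict (\<lambda>j. fiter f i m (z j)) {..<k}"
proof (induction m)
  case 0
  then show ?case using assms by (auto simp: space_nu PiE_iff extensional_def fun_eq_iff)
next
  case (Suc m)
  then show ?case by (auto simp: fun_eq_iff)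
qed

lemma fin_partition_prodpart:
  assumes "fin_partition \<mu> Q"
  shows "fin_partition \<nu> (prodpart k Q)"
  unfolding fin_partition_def
proof (intro conjI)
  have "prodpart k Q = (\<lambda>C. PiE {..<k} C) ` (PiE {..<k} (\<lambda>_. Q))"
  proof (intro set_eqI iffI)
    fix X assume "X \<in> prodpart k Q"
    then obtain C where C: "\<forall>j<k. C j \<in> Q" "X = PiE {..<k} C" by (auto simp: prodpart_def)
    then have "X = PiE {..<k} (restrict C {..<k})" by (auto intro!: PiE_cong)
    moreover have "restrict C {..<k} \<in> PiE {..<k} (\<lambda>_. Q)" using C by auto
    ultimately show "X \<in> (\<lambda>C. PiE {..<k} C) ` (PiE {..<k} (\<lambda>_. Q))" by blast
  qed (auto simp: prodpart_def PiE_iff)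
  then show "finite (prodpart k Q)"
    using assms by (simp add: fin_partition_def finite_PiE)
next
  show "prodpart k Q \<subseteq> sets \<nu>"
    using assms by (auto simp: prodpart_def fin_partition_def intro!: sets_PiM_I_finite)
next
  show "\<Union> (prodpart k Q) = space \<nu>"
  proof (intro set_eqI iffI)
    fix z assume "z \<in> \<Union> (prodpart k Q)"
    then show "z \<in> space \<nu>" by (auto simp: prodpart_def space_nu PiE_iff)
  next
    fix z assume z: "z \<in> space \<nu>"
    have "\<forall>j<k. lab Q (z j) \<in> Q \<and> z j \<in> lab Q (z j)" using lab[OF assms] space_mu by simp
    then have "z \<in> PiE {..<k} (\<lambda>j. lab Q (z j))" "PiE {..<k} (\<lambda>j. lab Q (z j)) \<in> prodpart k Q"
      using z by (auto simp: space_nu prodpart_def PiE_iff)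
    then show "z \<in> \<Union> (prodpart k Q)" by blast
  qed
next
  show "\<forall>C\<in>prodpart k Q. \<forall>D\<in>prodpart k Q. C \<noteq> D \<longrightarrow> C \<inter> D = {}"
  proof (intro ballI impI)
    fix X Y assume "X \<in> prodpart k Q" "Y \<in> prodpart k Q" "X \<noteq> Y"
    then obtain C D where C: "\<forall>j<k. C j \<in> Q" "X = PiE {..<k} C" and D: "\<forall>j<k. D j \<in> Q" "Y = PiE {..<k} D"
      by (auto simp: prodpart_def)
    show "X \<inter> Y = {}"
    proof (rule ccontr)
      assume "X \<inter> Y \<noteq> {}"
      then obtain z where z: "z \<in> X" "z \<in> Y" by blast
      have "\<forall>j<k. C j = D j"
      proof (intro allI impI)
        fix j assume j: "j < k"
        then have "z j \<in> C j" "z j \<in> D j" using z C D by auto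
        then show "C j = D j" using assms C D j unfolding fin_partition_def by blast
      qed
      then have "X = Y" using C D by (auto intro!: PiE_cong)
      with \<open>X \<noteq> Y\<close> show False by simp
    qed
  qed
qed

lemma lab_prodpart:
  assumes "fin_partition \<mu> Q" "z \<in> space \<nu>"
  shows "lab (prodpart k Q) z = PiE {..<k} (\<lambda>j. lab Q (z j))"
proof -
  have "\<forall>j<k. lab Q (z j) \<in> Q \<and> z j \<in> lab Q (z j)" using lab[OF assms(1)] space_mu by simp
  then have "z \<in> PiE {..<k} (\<lambda>j. lab Q (z j))" "PiE {..<k} (\<lambda>j. lab Q (z j)) \<in> prodpart k Q"
    using assms(2) by (auto simp: space_nu prodpart_def PiE_iff)
  then show ?thesis using lab_eq[OF fin_partition_prodpart[OF assms(1)] assms(2)] by blast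
qed

lemma mf_mu: "fiter f 0 m \<in> measurable \<mu> \<mu>"
  using mpres_fiter[of \<mu> f 0 m, OF mpres_f] by (simp add: mpres_def)

lemma mf_nu: "fiter TT 0 m \<in> measurable \<nu> \<nu>"
  using mpres_fiter[of \<nu> TT 0 m, OF mpres_TT] by (simp add: mpres_def)

lemma part_entropy_prodpart:
  assumes Q: "fin_partition \<mu> Q"
  shows "part_entropy \<nu> (seq_join \<nu> TT a (prodpart k Q) n) = real k * part_entropy \<mu> (seq_join \<mu> f a Q n)"
proof -
  note QQ = fin_partition_prodpart[OF Q]
  have spn: "\<And>m x. x \<in> space \<nu> \<Longrightarrow> fiter TT 0 m x \<in> space \<nu>" using measurable_space[OF mf_nu] by blast
  have spm: "\<And>m x. x \<in> space \<mu> \<Longrightarrow> fiter f 0 m x \<in> space \<mu>" using measurable_space[OF mf_mu] by blast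
  have "part_entropy \<nu> (seq_join \<nu> TT a (prodpart k Q) n) = HH \<nu> (SV (prodpart k Q) TT a n)"
    by (rule part_entropy_SV[OF QQ spn])
  also have "\<dots> = HH \<nu> (\<lambda>z. restrict (\<lambda>j. SV Q f a n (z j)) {..<k})"
  proof (rule HH_cong'[OF P_nu sf_SV[OF QQ mf_nu]])
    fix z z' assume z: "z \<in> space \<nu>" and z': "z' \<in> space \<nu>"
    have ne: "PiE {..<k} (\<lambda>j. lab Q (fiter f 0 m (y j))) \<noteq> {}" for m y
    proof -
      have "\<forall>j<k. fiter f 0 m (y j) \<in> lab Q (fiter f 0 m (y j))" using lab[OF Q] space_mu by simp
      then show ?thesis by (auto simp: PiE_eq_empty_iff)
    qed
    have "SV (prodpart k Q) TT a n z = SV (prodpart k Q) TT a n z' \<longleftrightarrow>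
        (\<forall>i<n. PiE {..<k} (\<lambda>j. lab Q (fiter f 0 (a i) (z j))) = PiE {..<k} (\<lambda>j. lab Q (fiter f 0 (a i) (z' j))))"
    proof -
      have L: "lab (prodpart k Q) (fiter TT 0 m y) = PiE {..<k} (\<lambda>j. lab Q (fiter f 0 m (y j)))"
        if y: "y \<in> space \<nu>" for m y
      proof -
        have "lab (prodpart k Q) (fiter TT 0 m y) = PiE {..<k} (\<lambda>j. lab Q (fiter TT 0 m y j))"
          by (rule lab_prodpart[OF Q spn[OF y]])
        also have "\<dots> = PiE {..<k} (\<lambda>j. lab Q (fiter f 0 m (y j)))"
          by (rule PiE_cong) (simp add: fiter_TT[OF y])
        finally show ?thesis .
      qed
      show ?thesis using L[OF z] L[OF z'] by (simp add: SV_def map_eq_conv Ball_def)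
    qed
    also have "\<dots> \<longleftrightarrow> (\<forall>i<n. \<forall>j<k. lab Q (fiter f 0 (a i) (z j)) = lab Q (fiter f 0 (a i) (z' j)))"
    proof -
      have ne': "lab Q y \<noteq> {}" for y using lab[OF Q, of y] space_mu by auto
      show ?thesis using ne' by (simp add: PiE_eq_iff Ball_def)
    qed
    also have "\<dots> \<longleftrightarrow> restrict (\<lambda>j. SV Q f a n (z j)) {..<k} = restrict (\<lambda>j. SV Q f a n (z' j)) {..<k}"
      by (auto simp: SV_def map_eq_conv restrict_def fun_eq_iff)
    finally show "SV (prodpart k Q) TT a n z = SV (prodpart k Q) TT a n z' \<longleftrightarrow>
        restrict (\<lambda>j. SV Q f a n (z j)) {..<k} = restrict (\<lambda>j. SV Q f a n (z' j)) {..<k}" .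
  qed
  also have "\<dots> = real k * HH \<mu> (SV Q f a n)"
    by (rule HH_PiM[OF P sf_SV[OF Q mf_mu]])
  also have "\<dots> = real k * part_entropy \<mu> (seq_join \<mu> f a Q n)"
    by (simp add: part_entropy_SV[OF Q spm])
  finally show ?thesis .
qed

end

definition pat :: "'b set set \<Rightarrow> 'b \<Rightarrow> 'b set set" where
  "pat F y = {B\<in>F. y \<in> B}"

definition atoms :: "'b set set \<Rightarrow> 'b set set" where
  "atoms F = (\<lambda>S. {y. pat F y = S}) ` (pat F ` UNIV)"

definition sdiff :: "'b set \<Rightarrow> 'b set \<Rightarrow> 'b set" where
  "sdiff E R = (E - R) \<union> (R - E)"

lemma sets_INT_space:
  assumes "finite I" "\<And>i. i \<in> I \<Longrightarrow> A i \<in> sets M"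
  shows "space M \<inter> (\<Inter>i\<in>I. A i) \<in> sets M"
  using assms
proof (induction I rule: finite_induct)
  case (insert i I)
  have "space M \<inter> (\<Inter>x\<in>insert i I. A x) = A i \<inter> (space M \<inter> (\<Inter>i\<in>I. A i))" by auto
  then show ?case using insert by auto
qed simp

lemma sets_pred_sf:
  assumes "simple_function M W"
  shows "{x\<in>space M. Q (W x)} \<in> sets M"
proof -
  have "{x\<in>space M. Q (W x)} = (\<Union>w\<in>{w\<in>W`space M. Q w}. W -` {w} \<inter> space M)" by auto
  moreover have "finite {w\<in>W`space M. Q w}" using assms by (simp add: simple_function_def)
  then have "(\<Union>w\<in>{w\<in>W`space M. Q w}. W -` {w} \<inter> space M) \<in> sets M"
    using sf_level_sets[OF assms] by (intro sets.finite_UN) auto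
  ultimately show ?thesis by simp
qed

context sysl
begin

definition pdet :: "'a set set \<Rightarrow> (nat \<Rightarrow> 'a) set \<Rightarrow> bool" where
  "pdet F R \<longleftrightarrow> (\<forall>z\<in>space \<nu>. \<forall>z'\<in>space \<nu>. (\<forall>j<k. pat F (z j) = pat F (z' j)) \<longrightarrow> (z \<in> R \<longleftrightarrow> z' \<in> R))"

lemma pdet_mono:
  assumes "pdet F R" "F \<subseteq> F'"
  shows "pdet F' R"
proof -
  have "pat F y = pat F' y \<inter> F" for y using assms(2) by (auto simp: pat_def)
  then show ?thesis using assms(1) unfolding pdet_def by metis
qed

lemma fin_partition_atoms:
  assumes F: "finite F" "F \<subseteq> sets \<mu>"
  shows "fin_partition \<mu> (atoms F)"
  unfolding fin_partition_def
proof (intro conjI)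
  have "pat F ` UNIV \<subseteq> Pow F" by (auto simp: pat_def)
  then have "finite (pat F ` UNIV)" using F by (metis finite_Pow_iff finite_subset)
  then show "finite (atoms F)" by (simp add: atoms_def)
next
  show "atoms F \<subseteq> sets \<mu>"
  proof
    fix X assume "X \<in> atoms F"
    then obtain y where X: "X = {y'. pat F y' = pat F y}" by (auto simp: atoms_def)
    have "X = space \<mu> \<inter> (\<Inter>B\<in>F. if y \<in> B then B else space \<mu> - B)"
      unfolding X space_mu by (auto simp: pat_def split: if_splits)
    also have "\<dots> \<in> sets \<mu>" by (rule sets_INT_space) (use F in auto)
    finally show "X \<in> sets \<mu>" .
  qed
next
  show "\<Union> (atoms F) = space \<mu>" by (auto simp: atoms_def space_mu)
next
  show "\<forall>C\<in>atoms F. \<forall>D\<in>atoms F. C \<noteq> D \<longrightarrow> C \<inter> D = {}" by (auto simp: atoms_def)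
qed

lemma lab_atoms:
  assumes F: "finite F" "F \<subseteq> sets \<mu>"
  shows "lab (atoms F) y = {y'. pat F y' = pat F y}"
proof -
  have "{y'. pat F y' = pat F y} \<in> atoms F" by (auto simp: atoms_def)
  then show ?thesis using lab_eq[OF fin_partition_atoms[OF F], of y] space_mu by auto
qed

lemma cell_char:
  assumes F: "finite F" "F \<subseteq> sets \<mu>" and z: "z \<in> space \<nu>"
  shows "z' \<in> lab (prodpart k (atoms F)) z \<longleftrightarrow> z' \<in> space \<nu> \<and> (\<forall>j<k. pat F (z' j) = pat F (z j))"
  unfolding lab_prodpart[OF fin_partition_atoms[OF F] z] lab_atoms[OF F]
  by (auto simp: space_nu PiE_iff)

lemma approx:
  assumes "E \<in> sets \<nu>"
  shows "\<forall>\<delta>>0. \<exists>F R. finite F \<and> F \<subseteq> sets \<mu> \<and> R \<in> sets \<nu> \<and> pdet F R \<and> measure \<nu> (sdiff E R) < \<delta>"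
proof -
  interpret N: prob_space \<nu> by (rule P_nu)
  let ?G = "{{f\<in>PiE {..<k} (\<lambda>_. space \<mu>). f i \<in> A} | i A. i \<in> {..<k} \<and> A \<in> sets \<mu>}"
  have sN: "sets \<nu> = sigma_sets (space \<nu>) ?G"
    by (simp add: sets_PiM_single space_PiM)
  have "E \<in> sigma_sets (space \<nu>) ?G" using assms sN by simp
  then show ?thesis
  proof (induction rule: sigma_sets.induct)
    case (Basic a)
    then obtain i A where a: "a = {f\<in>PiE {..<k} (\<lambda>_. space \<mu>). f i \<in> A}" "i < k" "A \<in> sets \<mu>" by auto
    have aN: "a \<in> sets \<nu>" using Basic.hyps sN by simp
    have "pdet {A} a" unfolding pdet_def
    proof (intro ballI impI)
      fix z z' assume zz: "z \<in> space \<nu>" "z' \<in> space \<nu>" "\<forall>j<k. pat {A} (z j) = pat {A} (z' j)"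
      then have "pat {A} (z i) = pat {A} (z' i)" using a(2) by blast
      then have "z i \<in> A \<longleftrightarrow> z' i \<in> A" by (auto simp: pat_def)
      moreover have "space \<nu> = PiE {..<k} (\<lambda>_. space \<mu>)" by (simp add: space_PiM)
      ultimately show "z \<in> a \<longleftrightarrow> z' \<in> a" using zz unfolding a(1) by simp
    qed
    moreover have "sdiff a a = {}" by (simp add: sdiff_def)
    ultimately show ?case using aN a(3) by (intro allI impI exI[of _ "{A}"] exI[of _ a]) simp
  next
    case Empty
    have "pdet {} {}" by (simp add: pdet_def)
    then show ?case by (intro allI impI exI[of _ "{}"] exI[of _ "{}"]) (auto simp: sdiff_def)
  next
    case (Compl a)
    have aN: "a \<in> sets \<nu>" using Compl.hyps sN by simp
    show ?case
    proof (intro allI impI)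
      fix \<delta> :: real assume d: "0 < \<delta>"
      obtain F R where FR0: "finite F \<and> F \<subseteq> sets \<mu> \<and> R \<in> sets \<nu> \<and> pdet F R \<and> measure \<nu> (sdiff a R) < \<delta>"
        using Compl.IH[rule_format, OF d] by blast
      then have FR: "finite F" "F \<subseteq> sets \<mu>" "R \<in> sets \<nu>" "pdet F R" "measure \<nu> (sdiff a R) < \<delta>"
        by simp_all
      have "pdet F (space \<nu> - R)" unfolding pdet_def
      proof (intro ballI impI)
        fix z z' assume zz: "z \<in> space \<nu>" "z' \<in> space \<nu>" "\<forall>j<k. pat F (z j) = pat F (z' j)"
        then have "z \<in> R \<longleftrightarrow> z' \<in> R" using FR(4) unfolding pdet_def by blast
        then show "z \<in> space \<nu> - R \<longleftrightarrow> z' \<in> space \<nu> - R" using zz by blast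
      qed
      moreover have "sdiff (space \<nu> - a) (space \<nu> - R) = sdiff a R"
        using sets.sets_into_space[OF aN] sets.sets_into_space[OF FR(3)] by (auto simp: sdiff_def)
      moreover have "space \<nu> - R \<in> sets \<nu>" by (rule sets.compl_sets[OF FR(3)])
      ultimately show "\<exists>F R. finite F \<and> F \<subseteq> sets \<mu> \<and> R \<in> sets \<nu> \<and> pdet F R \<and> measure \<nu> (sdiff (space \<nu> - a) R) < \<delta>"
        using FR(1,2,5) by (intro exI[of _ F] exI[of _ "space \<nu> - R"]) simp
    qed
  next
    case (Union e)
    have eN: "e n \<in> sets \<nu>" for n using Union.hyps[of n] sN by simp
    show ?case
    proof (intro allI impI)
      fix \<delta> :: real assume d: "0 < \<delta>"
      define U where "U N = (\<Union>n<N. e n)" for N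
      have UN: "U N \<in> sets \<nu>" for N using eN by (auto simp: U_def)
      have inc: "incseq U" unfolding incseq_def U_def
      proof (intro allI impI subsetI)
        fix m n :: nat and x assume "m \<le> n" "x \<in> (\<Union>i<m. e i)"
        then obtain i where "i < m" "x \<in> e i" by auto
        then show "x \<in> (\<Union>i<n. e i)" using \<open>m \<le> n\<close> by (auto intro!: bexI[of _ i])
      qed
      have "(\<Union>N. U N) = (\<Union>n. e n)" by (auto simp: U_def)
      then have lim: "(\<lambda>N. measure \<nu> (U N)) \<longlonglongrightarrow> measure \<nu> (\<Union>n. e n)"
        using N.finite_Lim_measure_incseq[OF _ inc] UN by auto
      have "\<exists>N0. \<forall>N\<ge>N0. dist (measure \<nu> (U N)) (measure \<nu> (\<Union>n. e n)) < \<delta> / 2"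
      proof -
        have "0 < \<delta> / 2" using d by simp
        then show ?thesis using lim unfolding LIMSEQ_def by blast
      qed
      then obtain N0 where N0: "\<And>N. N \<ge> N0 \<Longrightarrow> dist (measure \<nu> (U N)) (measure \<nu> (\<Union>n. e n)) < \<delta> / 2"
        by blast
      define N where "N = Suc N0"
      have Npos: "0 < real N" by (simp add: N_def)
      have "U N \<subseteq> (\<Union>n. e n)" by (auto simp: U_def)
      have EU: "measure \<nu> ((\<Union>n. e n) - U N) < \<delta> / 2"
      proof -
        have "measure \<nu> ((\<Union>n. e n) - U N) = measure \<nu> (\<Union>n. e n) - measure \<nu> (U N)"
          using \<open>U N \<subseteq> (\<Union>n. e n)\<close> UN eN by (intro N.finite_measure_Diff) auto
        moreover have "dist (measure \<nu> (U N)) (measure \<nu> (\<Union>n. e n)) < \<delta> / 2" using N0[of N] by (simp add: N_def)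
        ultimately show ?thesis unfolding dist_real_def by arith
      qed
      have "\<forall>n. \<exists>FR. finite (fst FR) \<and> fst FR \<subseteq> sets \<mu> \<and> snd FR \<in> sets \<nu> \<and> pdet (fst FR) (snd FR)
          \<and> measure \<nu> (sdiff (e n) (snd FR)) < \<delta> / (2 * N)"
      proof
        fix n
        have "0 < \<delta> / (2 * N)" using d Npos by simp
        then obtain F R where "finite F \<and> F \<subseteq> sets \<mu> \<and> R \<in> sets \<nu> \<and> pdet F R \<and> measure \<nu> (sdiff (e n) R) < \<delta> / (2 * N)"
          using Union.IH[of n, rule_format] by blast
        then show "\<exists>FR. finite (fst FR) \<and> fst FR \<subseteq> sets \<mu> \<and> snd FR \<in> sets \<nu> \<and> pdet (fst FR) (snd FR)
          \<and> measure \<nu> (sdiff (e n) (snd FR)) < \<delta> / (2 * N)" by (intro exI[of _ "(F, R)"]) simp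
      qed
      from choice[OF this] obtain FR where FR: "\<And>n. finite (fst (FR n)) \<and> fst (FR n) \<subseteq> sets \<mu> \<and> snd (FR n) \<in> sets \<nu>
          \<and> pdet (fst (FR n)) (snd (FR n)) \<and> measure \<nu> (sdiff (e n) (snd (FR n))) < \<delta> / (2 * N)"
        by blast
      define F where "F = (\<Union>n<N. fst (FR n))"
      define R where "R = (\<Union>n<N. snd (FR n))"
      have F: "finite F" "F \<subseteq> sets \<mu>" using FR by (auto simp: F_def)
      have R: "R \<in> sets \<nu>" using FR by (auto simp: R_def)
      have detR: "pdet F R"
      proof -
        have "pdet F (snd (FR n))" if "n < N" for n
          using pdet_mono[of "fst (FR n)" "snd (FR n)" F] FR that by (auto simp: F_def)
        then show ?thesis unfolding pdet_def R_def by blast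
      qed
      have sub: "sdiff (\<Union>n. e n) R \<subseteq> ((\<Union>n. e n) - U N) \<union> (\<Union>n<N. sdiff (e n) (snd (FR n)))"
      proof
        fix x assume x: "x \<in> sdiff (\<Union>n. e n) R"
        show "x \<in> ((\<Union>n. e n) - U N) \<union> (\<Union>n<N. sdiff (e n) (snd (FR n)))"
        proof (cases "x \<in> R")
          case True
          then obtain n where n: "n < N" "x \<in> snd (FR n)" by (auto simp: R_def)
          have "x \<notin> e n" using x True by (auto simp: sdiff_def)
          then show ?thesis using n by (auto simp: sdiff_def)
        next
          case False
          then have xe: "x \<in> (\<Union>n. e n)" using x by (auto simp: sdiff_def)
          show ?thesis
          proof (cases "x \<in> U N")
            case True
            then obtain n where n: "n < N" "x \<in> e n" by (auto simp: U_def)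
            have "x \<notin> snd (FR n)" using False n by (auto simp: R_def)
            then show ?thesis using n by (auto simp: sdiff_def)
          next
            case False
            then show ?thesis using xe by blast
          qed
        qed
      qed
      have sdN: "sdiff (e n) (snd (FR n)) \<in> sets \<nu>" for n using eN FR by (auto simp: sdiff_def)
      have "measure \<nu> (sdiff (\<Union>n. e n) R) \<le> measure \<nu> (((\<Union>n. e n) - U N) \<union> (\<Union>n<N. sdiff (e n) (snd (FR n))))"
        by (rule N.finite_measure_mono[OF sub]) (use eN UN sdN in auto)
      also have "\<dots> \<le> measure \<nu> ((\<Union>n. e n) - U N) + measure \<nu> (\<Union>n<N. sdiff (e n) (snd (FR n)))"
        by (rule measure_Un_le) (use eN UN sdN in auto)
      also have "measure \<nu> (\<Union>n<N. sdiff (e n) (snd (FR n))) \<le> (\<Sum>n<N. measure \<nu> (sdiff (e n) (snd (FR n))))"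
        by (rule measure_UNION_le) (use sdN in auto)
      also have "\<dots> \<le> (\<Sum>n<N. \<delta> / (2 * N))"
        by (rule sum_mono) (use FR in \<open>auto intro: less_imp_le\<close>)
      also have "\<dots> = \<delta> / 2" using Npos by simp
      finally have "measure \<nu> (sdiff (\<Union>n. e n) R) < \<delta>" using EU by simp
      then show "\<exists>F R. finite F \<and> F \<subseteq> sets \<mu> \<and> R \<in> sets \<nu> \<and> pdet F R \<and> measure \<nu> (sdiff (\<Union>n. e n) R) < \<delta>"
        using F R detR by blast
    qed
  qed
qed

end

context sysl
begin

lemma Hc_small:
  assumes ze: "fin_partition \<nu> \<zeta>" and eps: "0 < \<epsilon>"
  shows "\<exists>F. finite F \<and> F \<subseteq> sets \<mu> \<and>
    HH \<nu> (\<lambda>x. (lab \<zeta> x, lab (prodpart k (atoms F)) x)) - HH \<nu> (lab (prodpart k (atoms F))) \<le> \<epsilon>"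
proof -
  interpret N: prob_space \<nu> by (rule P_nu)
  define m where "m = card (lab \<zeta> ` space \<nu>)"
  define c where "c = \<epsilon> / (2 * (real m + 1))"
  have c: "0 < c" using eps by (simp add: c_def)
  define L where "L = \<bar>ln (1 / c)\<bar>"
  define \<delta> where "\<delta> = \<epsilon> / (2 * (1 + L))"
  have L: "0 \<le> L" by (simp add: L_def)
  have d: "0 < \<delta>" using eps L by (simp add: \<delta>_def)
  define Nz where "Nz = card \<zeta>"
  have d': "0 < \<delta> / (real Nz + 1)" using d by simp
  have "\<forall>E\<in>\<zeta>. \<exists>FR. finite (fst FR) \<and> fst FR \<subseteq> sets \<mu> \<and> snd FR \<in> sets \<nu> \<and> pdet (fst FR) (snd FR)
      \<and> measure \<nu> (sdiff E (snd FR)) < \<delta> / (real Nz + 1)"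
  proof
    fix E assume "E \<in> \<zeta>"
    then have "E \<in> sets \<nu>" using ze by (auto simp: fin_partition_def)
    then obtain F R where "finite F \<and> F \<subseteq> sets \<mu> \<and> R \<in> sets \<nu> \<and> pdet F R \<and> measure \<nu> (sdiff E R) < \<delta> / (real Nz + 1)"
      using approx[rule_format, OF _ d'] by blast
    then show "\<exists>FR. finite (fst FR) \<and> fst FR \<subseteq> sets \<mu> \<and> snd FR \<in> sets \<nu> \<and> pdet (fst FR) (snd FR)
      \<and> measure \<nu> (sdiff E (snd FR)) < \<delta> / (real Nz + 1)" by (intro exI[of _ "(F, R)"]) simp
  qed
  from bchoice[OF this] obtain FR where FR: "\<forall>E\<in>\<zeta>. finite (fst (FR E)) \<and> fst (FR E) \<subseteq> sets \<mu> \<and> snd (FR E) \<in> sets \<nu>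
      \<and> pdet (fst (FR E)) (snd (FR E)) \<and> measure \<nu> (sdiff E (snd (FR E))) < \<delta> / (real Nz + 1)"
    by blast
  define F where "F = (\<Union>E\<in>\<zeta>. fst (FR E))"
  define R where "R E = snd (FR E)" for E
  have finz: "finite \<zeta>" using ze by (simp add: fin_partition_def)
  have F: "finite F" "F \<subseteq> sets \<mu>" using FR finz by (auto simp: F_def)
  have detR: "pdet F (R E)" if "E \<in> \<zeta>" for E
    using pdet_mono[of "fst (FR E)" "snd (FR E)" F] FR that by (auto simp: F_def R_def)
  have RN: "R E \<in> sets \<nu>" if "E \<in> \<zeta>" for E using FR that by (simp add: R_def)
  define \<eta> where "\<eta> = prodpart k (atoms F)"
  have et: "fin_partition \<nu> \<eta>" unfolding \<eta>_def by (rule fin_partition_prodpart[OF fin_partition_atoms[OF F]])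
  define sel where "sel G = (if \<exists>E\<in>\<zeta>. G \<subseteq> R E then (SOME E. E \<in> \<zeta> \<and> G \<subseteq> R E) else {})" for G
  have Hb: "HH \<nu> (\<lambda>x. (lab \<zeta> x, lab \<eta> x)) - HH \<nu> (lab \<eta>)
      \<le> measure \<nu> {x\<in>space \<nu>. lab \<zeta> x \<noteq> sel (lab \<eta> x)} * (1 + ln (1 / c)) + c * m"
    unfolding m_def by (rule Hc_bound[OF P_nu sf_lab[OF ze] sf_lab[OF et] c])
  define S0 where "S0 = {x\<in>space \<nu>. lab \<zeta> x \<noteq> sel (lab \<eta> x)}"
  have S0N: "S0 \<in> sets \<nu>"
  proof -
    have "S0 = {x\<in>space \<nu>. (\<lambda>(u, v). u \<noteq> sel v) (lab \<zeta> x, lab \<eta> x)}" by (simp add: S0_def)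
    also have "\<dots> \<in> sets \<nu>" by (rule sets_pred_sf) (simp add: sf_lab[OF ze] sf_lab[OF et])
    finally show ?thesis .
  qed
  have sub: "S0 \<subseteq> (\<Union>E\<in>\<zeta>. sdiff E (R E))"
  proof
    fix x assume "x \<in> S0"
    then have x: "x \<in> space \<nu>" and ne: "lab \<zeta> x \<noteq> sel (lab \<eta> x)" by (auto simp: S0_def)
    define E0 where "E0 = lab \<zeta> x"
    define G where "G = lab \<eta> x"
    have E0: "E0 \<in> \<zeta>" "x \<in> E0" using lab[OF ze x] by (auto simp: E0_def)
    have xG: "x \<in> G" using lab[OF et x] by (simp add: G_def)
    show "x \<in> (\<Union>E\<in>\<zeta>. sdiff E (R E))"
    proof (cases "\<exists>E\<in>\<zeta>. G \<subseteq> R E")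
      case True
      define E1 where "E1 = (SOME E. E \<in> \<zeta> \<and> G \<subseteq> R E)"
      have E1: "E1 \<in> \<zeta> \<and> G \<subseteq> R E1" unfolding E1_def by (rule someI_ex) (use True in blast)
      have "sel G = E1" using True by (simp add: sel_def E1_def)
      then have "E1 \<noteq> E0" using ne by (simp add: E0_def G_def)
      have "x \<notin> E1"
      proof
        assume "x \<in> E1"
        then have "lab \<zeta> x = E1" using lab_eq[OF ze x] E1 by blast
        then show False using \<open>E1 \<noteq> E0\<close> by (simp add: E0_def)
      qed
      moreover have "x \<in> R E1" using E1 xG by blast
      ultimately show ?thesis using E1 by (auto simp: sdiff_def)
    next
      case False
      have "x \<notin> R E0"
      proof
        assume xR: "x \<in> R E0"
        have "G \<subseteq> R E0"
        proof
          fix z' assume "z' \<in> G"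
          then have "z' \<in> space \<nu>" "\<forall>j<k. pat F (z' j) = pat F (x j)"
            using cell_char[OF F x] by (auto simp: G_def \<eta>_def)
          then show "z' \<in> R E0" using detR[OF E0(1)] xR x unfolding pdet_def by blast
        qed
        then show False using False E0 by blast
      qed
      then show ?thesis using E0 by (auto simp: sdiff_def)
    qed
  qed
  have sdN: "sdiff E (R E) \<in> sets \<nu>" if "E \<in> \<zeta>" for E
    using RN[OF that] that ze by (auto simp: sdiff_def fin_partition_def)
  have "measure \<nu> S0 \<le> measure \<nu> (\<Union>E\<in>\<zeta>. sdiff E (R E))"
    by (rule N.finite_measure_mono[OF sub]) (use sdN finz in auto)
  also have "\<dots> \<le> (\<Sum>E\<in>\<zeta>. measure \<nu> (sdiff E (R E)))"
    by (rule measure_UNION_le[OF finz sdN])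
  also have "\<dots> \<le> (\<Sum>E\<in>\<zeta>. \<delta> / (real Nz + 1))"
    by (rule sum_mono) (use FR in \<open>auto simp: R_def intro: less_imp_le\<close>)
  also have "\<dots> = real Nz * (\<delta> / (real Nz + 1))" by (simp add: Nz_def)
  also have "\<dots> \<le> \<delta>" using d by (simp add: field_simps)
  finally have D: "measure \<nu> S0 \<le> \<delta>" .
  have D0: "0 \<le> measure \<nu> S0" by simp
  have "measure \<nu> S0 * (1 + ln (1 / c)) \<le> measure \<nu> S0 * (1 + L)"
    using D0 by (intro mult_left_mono) (auto simp: L_def)
  also have "\<dots> \<le> \<delta> * (1 + L)" using D L by (intro mult_right_mono) auto
  also have "\<dots> = \<epsilon> / 2"
  proof -
    have h: "1 + L \<noteq> 0" using L by simp
    show ?thesis unfolding \<delta>_def using h by (simp add: field_simps)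
  qed
  finally have A1: "measure \<nu> S0 * (1 + ln (1 / c)) \<le> \<epsilon> / 2" .
  have A2: "c * m \<le> \<epsilon> / 2"
  proof -
    have "c * m = \<epsilon> / 2 * (real m / (real m + 1))" by (simp add: c_def field_simps)
    also have "\<dots> \<le> \<epsilon> / 2 * 1" using eps by (intro mult_left_mono) auto
    finally show ?thesis by simp
  qed
  have "HH \<nu> (\<lambda>x. (lab \<zeta> x, lab \<eta> x)) - HH \<nu> (lab \<eta>) \<le> \<epsilon>"
    using Hb A1 A2 unfolding S0_def by linarith
  then show ?thesis using F unfolding \<eta>_def by blast
qed

lemma sep_prodpart:
  assumes Q: "fin_partition \<mu> Q"
  shows "seq_entropy_part \<nu> TT a (prodpart k Q) = ereal (real k) * seq_entropy_part \<mu> f a Q"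
proof -
  have "(\<lambda>n. ereal (part_entropy \<nu> (seq_join \<nu> TT a (prodpart k Q) n) / real n))
      = (\<lambda>n. ereal (real k) * ereal (part_entropy \<mu> (seq_join \<mu> f a Q n) / real n))"
    by (rule ext) (simp add: part_entropy_prodpart[OF Q])
  then show ?thesis unfolding seq_entropy_part_def by (simp only:) (rule limsup_ereal_mult_left, simp)
qed

lemma part_entropy_nonneg:
  assumes "prob_space M"
  shows "0 \<le> part_entropy M \<xi>"
proof -
  interpret prob_space M by fact
  have "0 \<le> entr_fun (measure M C)" if "C \<in> \<xi>" for C
  proof -
    have "measure M C \<le> 1" by (rule prob_le_1)
    have "ln (measure M C) \<le> 0"
    proof (cases "measure M C = 0")
      case False
      then have "0 < measure M C" using measure_nonneg[of M C] by linarith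
      then show ?thesis using \<open>measure M C \<le> 1\<close> by simp
    qed simp
    then show ?thesis by (simp add: entr_fun_def mult_nonneg_nonpos)
  qed
  then show ?thesis unfolding part_entropy_def by (intro sum_nonneg) auto
qed

lemma sep_nonneg:
  assumes "prob_space M" "fin_partition M \<xi>"
  shows "0 \<le> seq_entropy_part M T a \<xi>"
proof -
  have "limsup (\<lambda>n. (0::ereal)) \<le> seq_entropy_part M T a \<xi>"
    unfolding seq_entropy_part_def
    by (rule Limsup_mono) (use part_entropy_nonneg[OF assms(1)] in simp)
  then show ?thesis by (simp add: Limsup_const)
qed

lemma upper:
  assumes ze: "fin_partition \<nu> \<zeta>"
  shows "seq_entropy_part \<nu> TT a \<zeta> \<le> ereal (real k) * seq_entropy \<mu> f a"
proof (rule ereal_le_epsilon2)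
  fix e :: real assume e: "0 < e"
  obtain F where F: "finite F" "F \<subseteq> sets \<mu>"
    and H: "HH \<nu> (\<lambda>x. (lab \<zeta> x, lab (prodpart k (atoms F)) x)) - HH \<nu> (lab (prodpart k (atoms F))) \<le> e"
    using Hc_small[OF ze e] by blast
  have Q: "fin_partition \<mu> (atoms F)" by (rule fin_partition_atoms[OF F])
  have "seq_entropy_part \<nu> TT a \<zeta> \<le> seq_entropy_part \<nu> TT a (prodpart k (atoms F))
      + ereal (HH \<nu> (\<lambda>x. (lab \<zeta> x, lab (prodpart k (atoms F)) x)) - HH \<nu> (lab (prodpart k (atoms F))))"
    by (rule seq_entropy_part_bound[of \<nu> TT, OF P_nu mpres_TT ze fin_partition_prodpart[OF Q]])
  also have "\<dots> \<le> ereal (real k) * seq_entropy_part \<mu> f a (atoms F) + ereal e"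
    unfolding sep_prodpart[OF Q] using H by (intro add_mono) auto
  also have "\<dots> \<le> ereal (real k) * seq_entropy \<mu> f a + ereal e"
  proof -
    have "seq_entropy_part \<mu> f a (atoms F) \<le> seq_entropy \<mu> f a"
      unfolding seq_entropy_def by (rule SUP_upper) (use Q in simp)
    then show ?thesis by (intro add_mono ereal_mult_left_mono) auto
  qed
  finally show "seq_entropy_part \<nu> TT a \<zeta> \<le> ereal (real k) * seq_entropy \<mu> f a + ereal e" .
qed

theorem main:
  "seq_entropy \<nu> TT a = ereal (real k) * seq_entropy \<mu> f a"
proof (rule antisym)
  show "seq_entropy \<nu> TT a \<le> ereal (real k) * seq_entropy \<mu> f a"
    unfolding seq_entropy_def[of \<nu>] by (rule SUP_least) (use upper in simp)
next
  have ne: "{\<xi>. fin_partition \<mu> \<xi>} \<noteq> {}"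
  proof -
    have "fin_partition \<mu> {space \<mu>}" by (simp add: fin_partition_def)
    then show ?thesis by blast
  qed
  have "ereal (real k) * seq_entropy \<mu> f a = (SUP \<xi>\<in>{\<xi>. fin_partition \<mu> \<xi>}. ereal (real k) * seq_entropy_part \<mu> f a \<xi>)"
    unfolding seq_entropy_def
    by (rule SUP_ereal_mult_left[symmetric, OF ne]) (auto intro: sep_nonneg[OF P])
  also have "\<dots> \<le> seq_entropy \<nu> TT a"
  proof (rule SUP_least)
    fix \<xi> assume "\<xi> \<in> {\<xi>. fin_partition \<mu> \<xi>}"
    then have Q: "fin_partition \<mu> \<xi>" by simp
    have "ereal (real k) * seq_entropy_part \<mu> f a \<xi> = seq_entropy_part \<nu> TT a (prodpart k \<xi>)"
      by (rule sep_prodpart[OF Q, symmetric])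
    also have "\<dots> \<le> seq_entropy \<nu> TT a"
      unfolding seq_entropy_def[of \<nu>] by (rule SUP_upper) (use fin_partition_prodpart[OF Q] in simp)
    finally show "ereal (real k) * seq_entropy_part \<mu> f a \<xi> \<le> seq_entropy \<nu> TT a" .
  qed
  finally show "ereal (real k) * seq_entropy \<mu> f a \<le> seq_entropy \<nu> TT a" .
qed

end

theorem lemma3p6:
  fixes f :: "nat \<Rightarrow> 'a::metric_space \<Rightarrow> 'a"
    and \<mu> :: "'a measure"
    and a :: "nat \<Rightarrow> nat"
    and k :: nat
  assumes "compact (UNIV :: 'a set)"
    and "\<And>n. continuous_on UNIV (f n)"
    and "prob_space \<mu>"
    and "sets \<mu> = sets borel"
    and "\<And>n B. B \<in> sets borel \<Longrightarrow> measure \<mu> (f n -` B) = measure \<mu> B"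
    and "strict_mono a"
    and "k \<ge> 1"
  shows "seq_entropy (PiM {..<k} (\<lambda>_. \<mu>)) (\<lambda>n x. restrict (\<lambda>i. f n (x i)) {..<k}) a
         = ereal (real k) * seq_entropy \<mu> f a"
proof -
  interpret sysl f \<mu> k using assms(2,3,4,5) by (simp add: sysl_def)
  show ?thesis by (rule main)
qed

end
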